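(* Let $\mathcal M,\mathcal X,\mathcal Y$ be finite sets, $P_M$ a distribution on $\mathcal M$, $W_{Y|X}$ a channel from $\mathcal X$ to $\mathcal Y$. For every constant $c>0$ and every distribution $P_X$ on $\mathcal X$, \[ P_{js}(P_M,W_{Y|X})\le \sum_{\substack{(m,x,y):\\ P_M(m)P_X(x)W_{Y|X}(y|x)<cP_X(x)\bar W_Y(y)}}P_M(m)P_X(x)W_{Y|X}(y|x)\;+\;\sum_{\substack{(m,x,y):\\ P_M(m)P_X(x)W_{Y|X}(y|x)\ge cP_X(x)\bar W_Y(y)}}P_X(x)\bar W_Y(y), \] where $\bar W_Y(y):=\sum_x P_X(x)W_{Y|X}(y|x)$. Moreover, for fixed $P_M,P_X,W_{Y|X}$, the right-hand side, as a function of $c\in(0,\infty)$, attains its minimum at $c=1$.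
   Context: A code $\phi=(\mathsf e,\mathsf d)$ consists of an encoder $\mathsf e:\mathcal M\to\mathcal X$ and a decoder $\mathsf d:\mathcal Y\to\mathcal M$. Its average error probability is $P_{js}[\phi|P_M,W_{Y|X}]:=\sum_{m\in\mathcal M}P_M(m)\,W_{Y|X}(\{y:\mathsf d(y)\neq m\}|\mathsf e(m))$, and $P_{js}(P_M,W_{Y|X}):=\inf_\phi P_{js}[\phi|P_M,W_{Y|X}]$. The second sum on the right-hand side is the measure of the indicated set under $1_M\times P_X\times\bar W_Y$, where $1_M$ is the counting measure on $\mathcal M$. *)

theory Defs
  imports Complex_Main
begin

text \<open>Finite alphabets are modelled by types of class finite.
  A distribution on a finite type is a nonnegative function summing to 1.
  A channel W from X to Y is given by W x y = W(y|x).\<close>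

definition is_dist :: "('a::finite \<Rightarrow> real) \<Rightarrow> bool" where
  "is_dist p \<longleftrightarrow> (\<forall>a. 0 \<le> p a) \<and> (\<Sum>a\<in>UNIV. p a) = 1"

definition is_channel :: "('x::finite \<Rightarrow> 'y::finite \<Rightarrow> real) \<Rightarrow> bool" where
  "is_channel W \<longleftrightarrow> (\<forall>x. is_dist (W x))"

definition err_prob ::
  "('m::finite \<Rightarrow> real) \<Rightarrow> ('x::finite \<Rightarrow> 'y::finite \<Rightarrow> real) \<Rightarrow> ('m \<Rightarrow> 'x) \<Rightarrow> ('y \<Rightarrow> 'm) \<Rightarrow> real" where
  "err_prob PM W e d = (\<Sum>m\<in>UNIV. PM m * (\<Sum>y\<in>{y. d y \<noteq> m}. W (e m) y))"

definition P_js ::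
  "('m::finite \<Rightarrow> real) \<Rightarrow> ('x::finite \<Rightarrow> 'y::finite \<Rightarrow> real) \<Rightarrow> real" where
  "P_js PM W = (INF ed\<in>(UNIV :: (('m \<Rightarrow> 'x) \<times> ('y \<Rightarrow> 'm)) set). err_prob PM W (fst ed) (snd ed))"

definition Wbar :: "('x::finite \<Rightarrow> real) \<Rightarrow> ('x \<Rightarrow> 'y \<Rightarrow> real) \<Rightarrow> 'y \<Rightarrow> real" where
  "Wbar PX W y = (\<Sum>x\<in>UNIV. PX x * W x y)"

definition bound_rhs ::
  "('m::finite \<Rightarrow> real) \<Rightarrow> ('x::finite \<Rightarrow> real) \<Rightarrow> ('x \<Rightarrow> 'y::finite \<Rightarrow> real) \<Rightarrow> real \<Rightarrow> real" where
  "bound_rhs PM PX W c =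
     (\<Sum>(m,x,y)\<in>{(m,x,y). PM m * PX x * W x y < c * PX x * Wbar PX W y}. PM m * PX x * W x y)
   + (\<Sum>(m,x,y)\<in>{(m,x,y). PM m * PX x * W x y \<ge> c * PX x * Wbar PX W y}. PX x * Wbar PX W y)"

end

theory Submission
  imports Defs "HOL-Library.FuncSet"
begin

lemma PS:
  fixes f :: "'m::finite \<Rightarrow> 'x::finite \<Rightarrow> real"
  shows "(\<Sum>e\<in>UNIV. \<Prod>m\<in>UNIV. f m (e m)) = (\<Prod>m\<in>UNIV. \<Sum>x\<in>UNIV. f m x)"
  using prod_sum_PiE[of UNIV "\<lambda>_. UNIV" f] by simp

lemma prod_two:
  fixes a b :: real and m0 m1 :: "'m::finite"
  assumes "m0 \<noteq> m1"
  shows "(\<Prod>m\<in>UNIV. if m = m0 then a else if m = m1 then b else 1) = a * b"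
proof -
  have "(\<Prod>m\<in>UNIV. if m = m0 then a else if m = m1 then b else 1)
      = (\<Prod>m\<in>UNIV. (if m = m0 then a else 1) * (if m = m1 then b else 1))"
    using assms by (intro prod.cong) auto
  also have "\<dots> = a * b" by (simp add: prod.distrib prod.delta)
  finally show ?thesis .
qed

lemma L1:
  fixes PX :: "'x::finite \<Rightarrow> real" and h :: "'x \<Rightarrow> real" and m0 :: "'m::finite"
  assumes "(\<Sum>x\<in>UNIV. PX x) = 1"
  shows "(\<Sum>e\<in>(UNIV::('m\<Rightarrow>'x) set). (\<Prod>m\<in>UNIV. PX (e m)) * h (e m0)) = (\<Sum>x\<in>UNIV. PX x * h x)"
proof -
  have "(\<Sum>e\<in>(UNIV::('m\<Rightarrow>'x) set). (\<Prod>m\<in>UNIV. PX (e m)) * h (e m0))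
     = (\<Sum>e\<in>(UNIV::('m\<Rightarrow>'x) set). \<Prod>m\<in>UNIV. PX (e m) * (if m = m0 then h (e m) else 1))"
    by (simp add: prod.distrib prod.delta)
  also have "\<dots> = (\<Prod>m\<in>(UNIV::'m set). \<Sum>x\<in>UNIV. PX x * (if m = m0 then h x else 1))"
    by (rule PS)
  also have "\<dots> = (\<Prod>m\<in>(UNIV::'m set). if m = m0 then (\<Sum>x\<in>UNIV. PX x * h x) else 1)"
    using assms by (intro prod.cong) auto
  also have "\<dots> = (\<Sum>x\<in>UNIV. PX x * h x)" by (simp add: prod.delta)
  finally show ?thesis .
qed

lemma L2:
  fixes PX :: "'x::finite \<Rightarrow> real" and h0 h1 :: "'x \<Rightarrow> real" and m0 m1 :: "'m::finite"
  assumes "(\<Sum>x\<in>UNIV. PX x) = 1" "m0 \<noteq> m1"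
  shows "(\<Sum>e\<in>(UNIV::('m\<Rightarrow>'x) set). (\<Prod>m\<in>UNIV. PX (e m)) * (h0 (e m0) * h1 (e m1)))
       = (\<Sum>x\<in>UNIV. PX x * h0 x) * (\<Sum>x\<in>UNIV. PX x * h1 x)"
proof -
  have "(\<Sum>e\<in>(UNIV::('m\<Rightarrow>'x) set). (\<Prod>m\<in>UNIV. PX (e m)) * (h0 (e m0) * h1 (e m1)))
     = (\<Sum>e\<in>(UNIV::('m\<Rightarrow>'x) set). \<Prod>m\<in>UNIV. PX (e m) * (if m = m0 then h0 (e m) else if m = m1 then h1 (e m) else 1))"
  proof (rule sum.cong)
    fix e :: "'m \<Rightarrow> 'x"
    have "(\<Prod>m\<in>UNIV. if m = m0 then h0 (e m) else if m = m1 then h1 (e m) else 1)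
        = (\<Prod>m\<in>UNIV. if m = m0 then h0 (e m0) else if m = m1 then h1 (e m1) else 1)"
      by (intro prod.cong) auto
    also have "\<dots> = h0 (e m0) * h1 (e m1)" using prod_two[OF assms(2)] by simp
    finally show "(\<Prod>m\<in>UNIV. PX (e m)) * (h0 (e m0) * h1 (e m1)) = (\<Prod>m\<in>UNIV. PX (e m) * (if m = m0 then h0 (e m) else if m = m1 then h1 (e m) else 1))"
      by (simp add: prod.distrib)
  qed simp
  also have "\<dots> = (\<Prod>m\<in>(UNIV::'m set). \<Sum>x\<in>UNIV. PX x * (if m = m0 then h0 x else if m = m1 then h1 x else 1))"
    by (rule PS)
  also have "\<dots> = (\<Prod>m\<in>(UNIV::'m set). if m = m0 then (\<Sum>x\<in>UNIV. PX x * h0 x) else if m = m1 then (\<Sum>x\<in>UNIV. PX x * h1 x) else 1)"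
    using assms by (intro prod.cong) auto
  also have "\<dots> = (\<Sum>x\<in>UNIV. PX x * h0 x) * (\<Sum>x\<in>UNIV. PX x * h1 x)" by (rule prod_two[OF assms(2)])
  finally show ?thesis .
qed

lemma sum_set3:
  fixes g :: "'a::finite \<Rightarrow> 'b::finite \<Rightarrow> 'c::finite \<Rightarrow> real"
  shows "(\<Sum>(m,x,y)\<in>{(m,x,y). P m x y}. g m x y) = (\<Sum>m\<in>UNIV. \<Sum>x\<in>UNIV. \<Sum>y\<in>UNIV. if P m x y then g m x y else 0)"
proof -
  have "(\<Sum>(m,x,y)\<in>{(m,x,y). P m x y}. g m x y) = (\<Sum>t\<in>UNIV. (case t of (m,x,y) \<Rightarrow> if P m x y then g m x y else 0))"
  proof -
    have "(\<Sum>t\<in>UNIV. (case t of (m,x,y) \<Rightarrow> if P m x y then g m x y else 0))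
        = (\<Sum>t\<in>UNIV. if t \<in> {(m,x,y). P m x y} then (case t of (m,x,y) \<Rightarrow> g m x y) else 0)"
      by (intro sum.cong) (auto split: prod.splits)
    also have "\<dots> = (\<Sum>(m,x,y)\<in>{(m,x,y). P m x y}. g m x y)"
      by (rule trans[OF sum.inter_restrict[OF finite_UNIV, symmetric]]) simp
    finally show ?thesis by simp
  qed
  also have "\<dots> = (\<Sum>m\<in>UNIV. \<Sum>x\<in>UNIV. \<Sum>y\<in>UNIV. if P m x y then g m x y else 0)"
    by (simp add: UNIV_Times_UNIV[symmetric] sum.cartesian_product del: UNIV_Times_UNIV)
  finally show ?thesis .
qed

lemma dec_bound:
  fixes Q :: "'m::finite \<Rightarrow> bool"
  shows "(if (SOME m. Q m) \<noteq> m then 1 else 0) \<le> (if Q m then 0 else 1) + (\<Sum>m'\<in>UNIV-{m}. if Q m' then 1 else (0::real))"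
proof (cases "Q m")
  case True
  then have q: "Q (SOME m. Q m)" by (rule someI)
  show ?thesis
  proof (cases "(SOME m. Q m) = m")
    case False
    then have "(if Q (SOME m. Q m) then 1 else (0::real)) \<le> (\<Sum>m'\<in>UNIV-{m}. if Q m' then 1 else (0::real))"
      by (intro member_le_sum) auto
    then show ?thesis using q False True by simp
  qed (simp add: sum_nonneg)
next
  case False
  have "0 \<le> (\<Sum>m'\<in>UNIV-{m}. if Q m' then 1 else (0::real))" by (simp add: sum_nonneg)
  then show ?thesis using False by simp
qed



lemma alg:
  fixes w p :: real and v i :: "'y \<Rightarrow> real" and j :: "'y \<Rightarrow> 'm \<Rightarrow> real"
  shows "w * (p * (\<Sum>y\<in>Y. v y * (i y + (\<Sum>m'\<in>D. j y m')))) = (\<Sum>y\<in>Y. p * (w * (v y * i y))) + (\<Sum>y\<in>Y. \<Sum>m'\<in>D. p*(w*(v y * j y m')))"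
  by (simp add: sum_distrib_left distrib_left sum.distrib mult.assoc mult.left_commute)

lemma swap2:
  fixes f :: "'e \<Rightarrow> 'm \<Rightarrow> 'y \<Rightarrow> real"
  assumes "finite A" "finite B" "finite C"
  shows "(\<Sum>e\<in>A. \<Sum>m\<in>B. \<Sum>y\<in>C. f e m y) = (\<Sum>m\<in>B. \<Sum>y\<in>C. \<Sum>e\<in>A. f e m y)"
  by (subst sum.swap) (intro sum.cong refl sum.swap)

lemma swap3:
  fixes f :: "'e \<Rightarrow> 'm \<Rightarrow> 'y \<Rightarrow> 'm \<Rightarrow> real"
  assumes "finite A" "finite B" "finite C" "\<And>m. finite (D m)"
  shows "(\<Sum>e\<in>A. \<Sum>m\<in>B. \<Sum>y\<in>C. \<Sum>m'\<in>D m. f e m y m') = (\<Sum>m\<in>B. \<Sum>y\<in>C. \<Sum>m'\<in>D m. \<Sum>e\<in>A. f e m y m')"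
  by (subst swap2[OF assms(1-3)]) (intro sum.cong refl sum.swap)

lemma bound_alt:
  "bound_rhs PM PX W c =
     (\<Sum>m\<in>UNIV. \<Sum>x\<in>UNIV. \<Sum>y\<in>UNIV. if PM m * PX x * W x y < c * PX x * Wbar PX W y then PM m * PX x * W x y else 0)
   + (\<Sum>m\<in>UNIV. \<Sum>x\<in>UNIV. \<Sum>y\<in>UNIV. if c * PX x * Wbar PX W y \<le> PM m * PX x * W x y then PX x * Wbar PX W y else 0)"
  unfolding bound_rhs_def by (simp only: sum_set3)

lemma bound_alt2:
  "bound_rhs PM PX W c =
     (\<Sum>m\<in>UNIV. \<Sum>x\<in>UNIV. \<Sum>y\<in>UNIV. if PM m * PX x * W x y < c * PX x * Wbar PX W y then PM m * PX x * W x y else PX x * Wbar PX W y)"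
  unfolding bound_alt sum.distrib[symmetric] by (intro sum.cong refl) auto

theorem mainTheorem1:
  fixes PM :: "'m::finite \<Rightarrow> real" and PX :: "'x::finite \<Rightarrow> real"
    and W :: "'x \<Rightarrow> 'y::finite \<Rightarrow> real"
  assumes "is_dist PM" and "is_channel W" and "is_dist PX"
  shows "(\<forall>c>0. P_js PM W \<le> bound_rhs PM PX W c)
       \<and> (\<forall>c>0. bound_rhs PM PX W 1 \<le> bound_rhs PM PX W c)"
proof -
  have PMn: "\<And>m. 0 \<le> PM m" and PMs: "(\<Sum>m\<in>UNIV. PM m) = 1" using assms(1) by (auto simp: is_dist_def)
  have PXn: "\<And>x. 0 \<le> PX x" and PXs: "(\<Sum>x\<in>UNIV. PX x) = 1" using assms(3) by (auto simp: is_dist_def)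
  have Wn: "\<And>x y. 0 \<le> W x y" using assms(2) by (auto simp: is_channel_def is_dist_def)
  define Wb where "Wb = Wbar PX W"
  have Wbn: "\<And>y. 0 \<le> Wb y" unfolding Wb_def Wbar_def by (intro sum_nonneg mult_nonneg_nonneg PXn Wn)
  have part2: "bound_rhs PM PX W 1 \<le> bound_rhs PM PX W c" for c
    unfolding bound_alt2 by (intro sum_mono) auto
  have part1: "P_js PM W \<le> bound_rhs PM PX W c" for c
  proof -
    define inT where "inT m x y \<longleftrightarrow> c * PX x * Wb y \<le> PM m * PX x * W x y" for m x y
    define dec where "dec e = (\<lambda>y. SOME m. inT m (e m) y)" for e :: "'m \<Rightarrow> 'x"
    define w where "w e = (\<Prod>m\<in>UNIV. PX (e m))" for e :: "'m \<Rightarrow> 'x"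
    define F where "F e = (\<Sum>m\<in>UNIV. PM m * (\<Sum>y\<in>UNIV. W (e m) y * ((if inT m (e m) y then 0 else 1)
          + (\<Sum>m'\<in>UNIV-{m}. if inT m' (e m') y then 1 else 0))))" for e :: "'m \<Rightarrow> 'x"
    define g where "g e = err_prob PM W e (dec e)" for e
    have errF: "g e \<le> F e" for e
    proof -
      have "g e = (\<Sum>m\<in>UNIV. PM m * (\<Sum>y\<in>UNIV. W (e m) y * (if dec e y \<noteq> m then 1 else 0)))"
        unfolding g_def err_prob_def
      proof (rule sum.cong[OF refl], rule arg_cong2[where f="(*)"], rule refl)
        fix m
        have "(\<Sum>y\<in>{y. dec e y \<noteq> m}. W (e m) y) = (\<Sum>y\<in>UNIV. if dec e y \<noteq> m then W (e m) y else 0)"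
          using sum.inter_filter[of UNIV "W (e m)" "\<lambda>y. dec e y \<noteq> m"] by simp
        also have "\<dots> = (\<Sum>y\<in>UNIV. W (e m) y * (if dec e y \<noteq> m then 1 else 0))"
          by (intro sum.cong refl) simp
        finally show "(\<Sum>y\<in>{y. dec e y \<noteq> m}. W (e m) y) = (\<Sum>y\<in>UNIV. W (e m) y * (if dec e y \<noteq> m then 1 else 0))" .
      qed
      also have "\<dots> \<le> F e"
        unfolding F_def dec_def
        by (intro sum_mono mult_left_mono PMn Wn dec_bound)
      finally show ?thesis .
    qed
    have wn: "0 \<le> w e" for e unfolding w_def by (intro prod_nonneg PXn)
    have ws: "(\<Sum>e\<in>UNIV. w e) = 1"
      unfolding w_def using PS[of "\<lambda>m x. PX x"] PXs by simp
    obtain e0 where e0: "g e0 = Min (range g)"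
    proof -
      have "Min (range g) \<in> range g" by (rule Min_in) auto
      then show ?thesis using that by (metis imageE)
    qed
    have e0le: "g e0 \<le> g e" for e unfolding e0 by (rule Min_le) auto
    define S1 where "S1 = (\<Sum>m\<in>UNIV. \<Sum>y\<in>UNIV. PM m * (\<Sum>x\<in>UNIV. PX x * (W x y * (if inT m x y then 0 else 1))))"
    define G where "G m' y = (\<Sum>x\<in>UNIV. PX x * (if inT m' x y then 1 else 0))" for m' y
    define S2 where "S2 = (\<Sum>m\<in>UNIV. \<Sum>y\<in>UNIV. \<Sum>m'\<in>UNIV-{m}. PM m * (Wb y * G m' y))"
    have Gn: "0 \<le> G m' y" for m' y unfolding G_def by (intro sum_nonneg) (simp add: PXn)
    have perE: "w e * F e =
         (\<Sum>m\<in>UNIV. \<Sum>y\<in>UNIV. PM m * (w e * (W (e m) y * (if inT m (e m) y then 0 else 1)))) +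
         (\<Sum>m\<in>UNIV. \<Sum>y\<in>UNIV. \<Sum>m'\<in>UNIV - {m}. PM m * (w e * (W (e m) y * (if inT m' (e m') y then 1 else 0))))" for e
      unfolding F_def
      by (rule trans[OF sum_distrib_left], rule trans[OF _ sum.distrib], rule sum.cong[OF refl], rule alg)
    have "(\<Sum>e\<in>UNIV. w e * F e) =
       (\<Sum>e\<in>UNIV. \<Sum>m\<in>UNIV. \<Sum>y\<in>UNIV. PM m * (w e * (W (e m) y * (if inT m (e m) y then 0 else 1))))
       + (\<Sum>e\<in>UNIV. \<Sum>m\<in>UNIV. \<Sum>y\<in>UNIV. \<Sum>m'\<in>UNIV-{m}. PM m * (w e * (W (e m) y * (if inT m' (e m') y then 1 else 0))))"
      unfolding perE by (rule sum.distrib)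
    also have "\<dots> = S1 + S2"
    proof -
      have "(\<Sum>e\<in>UNIV. \<Sum>m\<in>UNIV. \<Sum>y\<in>UNIV. PM m * (w e * (W (e m) y * (if inT m (e m) y then 0 else 1)))) = S1"
        unfolding S1_def
      proof (rule trans[OF swap2[OF finite_UNIV finite_UNIV finite_UNIV]], intro sum.cong refl)
        fix m :: 'm and y :: 'y
        show "(\<Sum>e\<in>UNIV. PM m * (w e * (W (e m) y * (if inT m (e m) y then 0 else 1))))
          = PM m * (\<Sum>x\<in>UNIV. PX x * (W x y * (if inT m x y then 0 else 1)))"
          unfolding sum_distrib_left[symmetric] w_def
          using L1[OF PXs, of "\<lambda>x. W x y * (if inT m x y then 0 else 1)" m] by (simp only:)
      qed
      moreover have "(\<Sum>e\<in>UNIV. \<Sum>m\<in>UNIV. \<Sum>y\<in>UNIV. \<Sum>m'\<in>UNIV-{m}. PM m * (w e * (W (e m) y * (if inT m' (e m') y then 1 else 0)))) = S2"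
        unfolding S2_def
      proof (rule trans[OF swap3[OF finite_UNIV finite_UNIV finite_UNIV finite_Diff[OF finite_UNIV]]], intro sum.cong refl)
        fix m :: 'm and y :: 'y and m' :: 'm assume "m' \<in> UNIV - {m}"
        then have ne: "m \<noteq> m'" by auto
        show "(\<Sum>e\<in>UNIV. PM m * (w e * (W (e m) y * (if inT m' (e m') y then 1 else 0))))
          = PM m * (Wb y * G m' y)"
          unfolding sum_distrib_left[symmetric] w_def G_def Wb_def Wbar_def
          using L2[OF PXs ne, of "\<lambda>x. W x y" "\<lambda>x. if inT m' x y then 1 else 0"] by (simp only:)
      qed
      ultimately show ?thesis by simp
    qed
    finally have EF: "(\<Sum>e\<in>UNIV. w e * F e) = S1 + S2" .
    have S2le: "S2 \<le> (\<Sum>m\<in>UNIV. \<Sum>x\<in>UNIV. \<Sum>y\<in>UNIV. if c * PX x * Wbar PX W y \<le> PM m * PX x * W x y then PX x * Wbar PX W y else 0)"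
    proof -
      have "S2 \<le> (\<Sum>m\<in>UNIV. \<Sum>y\<in>UNIV. \<Sum>m'\<in>UNIV. PM m * (Wb y * G m' y))"
        unfolding S2_def
        by (intro sum_mono sum_mono2) (auto intro!: mult_nonneg_nonneg PMn Wbn Gn)
      also have "\<dots> = (\<Sum>m\<in>UNIV. PM m * (\<Sum>y\<in>UNIV. \<Sum>m'\<in>UNIV. Wb y * G m' y))"
        by (simp add: sum_distrib_left)
      also have "\<dots> = (\<Sum>y\<in>UNIV. \<Sum>m'\<in>UNIV. Wb y * G m' y)"
        by (simp add: sum_distrib_right[symmetric] PMs)
      also have "\<dots> = (\<Sum>m\<in>UNIV. \<Sum>x\<in>UNIV. \<Sum>y\<in>UNIV. if c * PX x * Wbar PX W y \<le> PM m * PX x * W x y then PX x * Wbar PX W y else 0)"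
        unfolding G_def sum_distrib_left inT_def Wb_def
        by (rule trans[OF _ swap2[OF finite_UNIV finite_UNIV finite_UNIV]], intro sum.cong refl) simp
      finally show ?thesis .
    qed
    have S1eq: "S1 = (\<Sum>m\<in>UNIV. \<Sum>x\<in>UNIV. \<Sum>y\<in>UNIV. if PM m * PX x * W x y < c * PX x * Wbar PX W y then PM m * PX x * W x y else 0)"
      unfolding S1_def sum_distrib_left inT_def Wb_def
      apply (intro sum.cong refl)
      apply (subst sum.swap)
      apply (intro sum.cong refl)
      apply (auto simp: not_le)
      done
    have "P_js PM W \<le> g e0"
      unfolding P_js_def g_def
      using cINF_lower[of "(\<lambda>ed. err_prob PM W (fst ed) (snd ed))" UNIV "(e0, dec e0)"]
      by (simp add: bdd_below_finite)
    also have "g e0 = (\<Sum>e\<in>UNIV. w e * g e0)" by (simp add: sum_distrib_right[symmetric] ws)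
    also have "\<dots> \<le> (\<Sum>e\<in>UNIV. w e * F e)"
      by (intro sum_mono mult_left_mono wn order.trans[OF e0le errF])
    also have "\<dots> \<le> bound_rhs PM PX W c"
      unfolding EF bound_alt using S1eq S2le by simp
    finally show ?thesis .
  qed
  show ?thesis using part1 part2 by blast
qed

end
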